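(* Let $\Sigma$ be a set, $A\in\mathrm{Abs}(\wp(\Sigma))$ with Galois insertion $(\alpha,\wp(\Sigma),A,\gamma)$, and $F$ a set of functions $f:\wp(\Sigma)^{\sharp(f)}\to\wp(\Sigma)$ with $\sharp(f)\ge1$. Let $\mathcal{L}_{A,F}$ be the language with atoms the elements $a\in A$ and operators the elements of $F$, with semantic structure $\mathcal{S}_{A,F}=(\Sigma,I)$ where $I(a)=\gamma(a)$ and $I(f)=f$. Assume $\mathcal{L}_{A,F}$ is closed under infinite logical conjunction. Then $\mathrm{AD}_{\mathcal{L}_{A,F}}=\mathcal{S}_F(A)$.
   Context: For a language $\mathcal{L}$ (formulae $\varphi::=p\mid f(\varphi_1,..,\varphi_n)$) with semantic structure $(\Sigma,I)$, the concrete semantics is $[\![p]\!]=I(p)$, $[\![f(\varphi_1,..,\varphi_n)]\!]=I(f)([\![\varphi_1]\!],..,[\![\varphi_n]\!])$. $\mathcal{L}$ is closed under infinite logical conjunction if for every $\Phi\subseteq\mathcal{L}$ (including $\varnothing$) there is $\psi$ with $[\![\psi]\!]=\bigcap_{\varphi\in\Phi}[\![\varphi]\!]$ (empty intersection $=\Sigma$). $\mathrm{AD}_{\mathcal{L}}$ is the abstract domain (upper closure operator on $\wp(\Sigma)$) whose image is the set of intersections of subfamilies of $\{[\![\varphi]\!]\mid\varphi\in\mathcal{L}\}$. Abstract domains of $\wp(\Sigma)$ are given by Galois insertions $(\alpha,\wp(\Sigma),A,\gamma)$ and identified with their closures $\gamma\circ\alpha$, ordered pointwise ($\sqsubseteq$: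 more precise). A closure $\rho$ is forward complete for $f$ if $f(\rho(X_1),..,\rho(X_n))=\rho(f(\rho(X_1),..,\rho(X_n)))$ for all $X_i$; $\mathcal{S}_F(A)$, the forward $F$-complete shell of $A$, is the most abstract closure $\rho\sqsubseteq\gamma\circ\alpha$ that is forward complete for every $f\in F$. *)

theory Defs
  imports Main
begin

text \<open>An operator symbol is a pair (arity, function on lists of sets).\<close>

datatype ('b, 's) form =
    Atom 'b
  | Op "nat \<times> ('s set list \<Rightarrow> 's set)" "('b, 's) form list"

inductive wf_form :: "(nat \<times> ('s set list \<Rightarrow> 's set)) set \<Rightarrow> ('b, 's) form \<Rightarrow> bool"
  for F where
  wf_Atom: "wf_form F (Atom a)"
| wf_Op: "(n, f) \<in> F \<Longrightarrow> length args = n \<Longrightarrow> (\<forall>\<phi>\<in>set args. wf_form F \<phi>)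
           \<Longrightarrow> wf_form F (Op (n, f) args)"

fun sem :: "('b \<Rightarrow> 's set) \<Rightarrow> ('b, 's) form \<Rightarrow> 's set" where
  "sem \<gamma> (Atom a) = \<gamma> a"
| "sem \<gamma> (Op nf args) = snd nf (map (sem \<gamma>) args)"

definition lang :: "(nat \<times> ('s set list \<Rightarrow> 's set)) set \<Rightarrow> ('b, 's) form set" where
  "lang F = {\<phi>. wf_form F \<phi>}"

text \<open>Closure under infinite logical conjunction (empty intersection = UNIV = Sigma).\<close>

definition closed_inf_conj :: "('b \<Rightarrow> 's set) \<Rightarrow> ('b, 's) form set \<Rightarrow> bool" where
  "closed_inf_conj \<gamma> L \<longleftrightarrow>
     (\<forall>\<Phi> \<subseteq> L. \<exists>\<psi>\<in>L. sem \<gamma> \<psi> = (\<Inter>\<phi>\<in>\<Phi>. sem \<gamma> \<phi>))"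

definition galois_insertion :: "('s set \<Rightarrow> 'b::order) \<Rightarrow> ('b \<Rightarrow> 's set) \<Rightarrow> bool" where
  "galois_insertion \<alpha> \<gamma> \<longleftrightarrow>
     (\<forall>X b. \<alpha> X \<le> b \<longleftrightarrow> X \<subseteq> \<gamma> b) \<and> (\<forall>b. \<alpha> (\<gamma> b) = b)"

text \<open>Upper closure operators on \<wp>(Sigma); they are ordered pointwise by the
  function order \<le> (smaller = more precise).\<close>

definition uco :: "('s set \<Rightarrow> 's set) \<Rightarrow> bool" where
  "uco \<rho> \<longleftrightarrow> (\<forall>X. X \<subseteq> \<rho> X) \<and> (\<forall>X Y. X \<subseteq> Y \<longrightarrow> \<rho> X \<subseteq> \<rho> Y) \<and> (\<forall>X. \<rho> (\<rho> X) = \<rho> X)"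

definition AD :: "('b \<Rightarrow> 's set) \<Rightarrow> ('b, 's) form set \<Rightarrow> 's set \<Rightarrow> 's set" where
  "AD \<gamma> L X = \<Inter>{Y. (\<exists>S \<subseteq> sem \<gamma> ` L. Y = \<Inter>S) \<and> X \<subseteq> Y}"

definition fwd_complete :: "('s set \<Rightarrow> 's set) \<Rightarrow> nat \<times> ('s set list \<Rightarrow> 's set) \<Rightarrow> bool" where
  "fwd_complete \<rho> nf \<longleftrightarrow>
     (\<forall>Xs. length Xs = fst nf \<longrightarrow>
        snd nf (map \<rho> Xs) = \<rho> (snd nf (map \<rho> Xs)))"

definition fwd_shell :: "(nat \<times> ('s set list \<Rightarrow> 's set)) set \<Rightarrow> ('s set \<Rightarrow> 's set) \<Rightarrow> 's set \<Rightarrow> 's set" where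
  "fwd_shell F \<rho>A = (GREATEST \<rho>. uco \<rho> \<and> \<rho> \<le> \<rho>A \<and> (\<forall>nf\<in>F. fwd_complete \<rho> nf))"

end

theory Submission
  imports Defs
begin

lemma inter_in_sem:
  assumes c: "closed_inf_conj \<gamma> L" and S: "S \<subseteq> sem \<gamma> ` L"
  shows "\<Inter>S \<in> sem \<gamma> ` L"
proof -
  let ?P = "{\<phi>\<in>L. sem \<gamma> \<phi> \<in> S}"
  obtain \<psi> where "\<psi> \<in> L" "sem \<gamma> \<psi> = (\<Inter>\<phi>\<in>?P. sem \<gamma> \<phi>)"
  proof -
    have "?P \<subseteq> L" by blast
    have h: "\<forall>\<Phi>. \<Phi> \<subseteq> L \<longrightarrow> (\<exists>\<psi>\<in>L. sem \<gamma> \<psi> = (\<Inter>\<phi>\<in>\<Phi>. sem \<gamma> \<phi>))"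
      using c unfolding closed_inf_conj_def by assumption
    from h[rule_format, OF \<open>?P \<subseteq> L\<close>] show ?thesis using that by blast
  qed
  moreover have "(\<Inter>\<phi>\<in>?P. sem \<gamma> \<phi>) = \<Inter>S" using S by blast
  ultimately show ?thesis by (metis image_eqI)
qed

lemma AD_in:
  assumes c: "closed_inf_conj \<gamma> L"
  shows "AD \<gamma> L X \<in> sem \<gamma> ` L"
proof -
  have "{Y. (\<exists>S \<subseteq> sem \<gamma> ` L. Y = \<Inter>S) \<and> X \<subseteq> Y} \<subseteq> sem \<gamma> ` L"
    using inter_in_sem[OF c] by blast
  then show ?thesis unfolding AD_def by (rule inter_in_sem[OF c])
qed

lemma AD_ext: "X \<subseteq> AD \<gamma> L X" unfolding AD_def by blast

lemma AD_fix: "Y \<in> sem \<gamma> ` L \<Longrightarrow> AD \<gamma> L Y = Y"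
  unfolding AD_def
  apply (rule antisym)
   apply (rule Inter_lower) apply simp apply (rule exI[of _ "{Y}"]) apply simp
  apply blast done

lemma AD_mono: "X \<subseteq> Y \<Longrightarrow> AD \<gamma> L X \<subseteq> AD \<gamma> L Y"
  unfolding AD_def by blast

lemma AD_uco: assumes c: "closed_inf_conj \<gamma> L" shows "uco (AD \<gamma> L)"
  by (simp add: uco_def AD_ext AD_mono AD_fix[OF AD_in[OF c]])

lemma fix_rho:
  assumes gi: "galois_insertion \<alpha> \<gamma>" and u: "uco \<rho>" and le: "\<rho> \<le> \<gamma> \<circ> \<alpha>"
    and fc: "\<forall>nf\<in>F. fwd_complete \<rho> nf"
    and w: "wf_form F \<phi>"
  shows "\<rho> (sem \<gamma> \<phi>) = sem \<gamma> \<phi>"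
  using w
proof (induction rule: wf_form.induct)
  case (wf_Atom a)
  have "\<rho> (\<gamma> a) \<subseteq> \<gamma> (\<alpha> (\<gamma> a))" using le by (simp add: le_fun_def)
  also have "\<dots> = \<gamma> a" using gi unfolding galois_insertion_def by simp
  finally show ?case using u unfolding uco_def by auto
next
  case (wf_Op n f args)
  have m: "map \<rho> (map (sem \<gamma>) args) = map (sem \<gamma>) args"
    using wf_Op.IH by (simp add: map_idI)
  have "fwd_complete \<rho> (n, f)" using fc wf_Op.hyps(1) by blast
  then have h: "\<forall>Xs. length Xs = n \<longrightarrow> f (map \<rho> Xs) = \<rho> (f (map \<rho> Xs))"
    unfolding fwd_complete_def by simp
  have "length (map (sem \<gamma>) args) = n" using wf_Op.hyps(2) by simp
  then have "f (map \<rho> (map (sem \<gamma>) args)) = \<rho> (f (map \<rho> (map (sem \<gamma>) args)))"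
    by (rule h[rule_format])
  then have eq: "f (map (sem \<gamma>) args) = \<rho> (f (map (sem \<gamma>) args))" unfolding m .
  show ?case using eq[symmetric] by simp
qed

lemma list_choice:
  assumes "\<forall>x\<in>set xs. \<exists>p\<in>L. g x = h p"
  shows "\<exists>ps. map g xs = map h ps \<and> (\<forall>q\<in>set ps. q \<in> L)"
  using assms
proof (induction xs)
  case Nil
  show ?case by (rule exI[of _ "[]"]) simp
next
  case (Cons x xs)
  then obtain ps where ps: "map g xs = map h ps" "\<forall>q\<in>set ps. q \<in> L" by auto
  obtain p where p: "p \<in> L" "g x = h p" using Cons.prems by auto
  show ?case by (rule exI[of _ "p # ps"]) (use ps p in simp)
qed

theorem theorem6p5:
  fixes \<alpha> :: "'s set \<Rightarrow> 'b::order"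
    and \<gamma> :: "'b \<Rightarrow> 's set"
    and F :: "(nat \<times> ('s set list \<Rightarrow> 's set)) set"
  assumes "galois_insertion \<alpha> \<gamma>"
    and "\<forall>nf\<in>F. fst nf \<ge> 1"
    and "closed_inf_conj \<gamma> (lang F :: ('b, 's) form set)"
  shows "AD \<gamma> (lang F :: ('b, 's) form set) = fwd_shell F (\<gamma> \<circ> \<alpha>)"
proof -
  let ?L = "lang F :: ('b, 's) form set"
  note gi = assms(1) and c = assms(3)
  have P1: "uco (AD \<gamma> ?L)" by (rule AD_uco[OF c])
  have P2: "AD \<gamma> ?L \<le> \<gamma> \<circ> \<alpha>"
  proof (rule le_funI)
    fix X
    have "X \<subseteq> \<gamma> (\<alpha> X)" using gi unfolding galois_insertion_def by blast
    moreover have "\<gamma> (\<alpha> X) \<in> sem \<gamma> ` ?L"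
      by (rule image_eqI[of _ _ "Atom (\<alpha> X)"]) (auto simp: lang_def wf_form.intros)
    ultimately show "AD \<gamma> ?L X \<le> (\<gamma> \<circ> \<alpha>) X"
    proof -
      have "AD \<gamma> ?L X \<subseteq> AD \<gamma> ?L (\<gamma> (\<alpha> X))" using \<open>X \<subseteq> _\<close> by (rule AD_mono)
      also have "\<dots> = \<gamma> (\<alpha> X)" using \<open>\<gamma> (\<alpha> X) \<in> _\<close> by (rule AD_fix)
      finally show ?thesis by simp
    qed
  qed
  have P3: "\<forall>nf\<in>F. fwd_complete (AD \<gamma> ?L) nf"
  proof
    fix nf assume nf: "nf \<in> F"
    obtain n f where nfe: "nf = (n, f)" by fastforce
    show "fwd_complete (AD \<gamma> ?L) nf" unfolding fwd_complete_def
    proof (intro allI impI)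
      fix Xs :: "'s set list" assume len: "length Xs = fst nf"
      have "\<forall>X\<in>set Xs. \<exists>\<phi>\<in>?L. AD \<gamma> ?L X = sem \<gamma> \<phi>" using AD_in[OF c] by blast
      then obtain args where a: "map (AD \<gamma> ?L) Xs = map (sem \<gamma>) args" "\<forall>\<phi>\<in>set args. \<phi> \<in> ?L"
        using list_choice[of Xs ?L "AD \<gamma> ?L" "sem \<gamma>"] by blast
      have "length args = n" using len arg_cong[OF a(1), of length] nfe by simp
      then have "Op (n, f) args \<in> ?L" using a(2) nf nfe by (auto simp: lang_def intro: wf_form.intros)
      then have "sem \<gamma> (Op (n, f) args) \<in> sem \<gamma> ` ?L" by blast
      then show "snd nf (map (AD \<gamma> ?L) Xs) = AD \<gamma> ?L (snd nf (map (AD \<gamma> ?L) Xs))"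
      proof -
        have e: "snd nf (map (AD \<gamma> ?L) Xs) = sem \<gamma> (Op (n, f) args)" using a(1) nfe by simp
        show ?thesis unfolding e using AD_fix[OF \<open>sem \<gamma> (Op (n, f) args) \<in> _\<close>] by simp
      qed
    qed
  qed
  have P4: "\<rho> \<le> AD \<gamma> ?L" if u: "uco \<rho>" and le: "\<rho> \<le> \<gamma> \<circ> \<alpha>"
    and fc: "\<forall>nf\<in>F. fwd_complete \<rho> nf" for \<rho>
  proof (rule le_funI)
    fix X
    obtain \<phi> where ph: "\<phi> \<in> ?L" "AD \<gamma> ?L X = sem \<gamma> \<phi>"
      using AD_in[OF c, of X] by (elim imageE) simp
    have w: "wf_form F \<phi>" using ph(1) unfolding lang_def by simp
    have fx: "\<rho> (sem \<gamma> \<phi>) = sem \<gamma> \<phi>" by (rule fix_rho[OF gi u le fc w])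
    have mono: "\<forall>X Y. X \<subseteq> Y \<longrightarrow> \<rho> X \<subseteq> \<rho> Y" using u unfolding uco_def by (elim conjE)
    have "\<rho> X \<subseteq> \<rho> (AD \<gamma> ?L X)" using mono AD_ext[of X \<gamma> ?L] by blast
    then show "\<rho> X \<le> AD \<gamma> ?L X" unfolding ph(2) fx .
  qed
  show ?thesis unfolding fwd_shell_def
  proof (rule Greatest_equality[symmetric])
    show "uco (AD \<gamma> ?L) \<and> AD \<gamma> ?L \<le> \<gamma> \<circ> \<alpha> \<and> (\<forall>nf\<in>F. fwd_complete (AD \<gamma> ?L) nf)"
      using P1 P2 P3 by blast
  next
    fix y assume "uco y \<and> y \<le> \<gamma> \<circ> \<alpha> \<and> (\<forall>nf\<in>F. fwd_complete y nf)"
    then show "y \<le> AD \<gamma> ?L" using P4 by blast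
  qed
qed

end
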